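(* Let $T>0$, $N\ge2$, $h=T/N$, $t_n=nh$, and let $\beta,\gamma\in\mathbb R$ satisfy either (C1) $\beta<0$, $\gamma<0$ and $-1<\beta+\gamma<0$, or (C2) $\beta\ge0$ and $\gamma\in(-1,0)$. Then there is a constant $C$ (independent of $N$) such that for all $1<j\le N$, $\tau\in(t_{j-1},t_j]$ and $\eta\in(0,t_{j-1}]$, $$\int_0^\eta(\eta-r)^\beta\big((t_{j-1}-r)^\gamma-(\tau-r)^\gamma\big)\,\mathrm dr\le Ch^{(\beta+\gamma+1)\wedge(\gamma+1)}.$$
   Context: $a\wedge b=\min\{a,b\}$. *)

theory Defs
  imports "HOL-Analysis.Analysis"
begin

end

theory Submission
  imports Defs "HOL-Analysis.Analysis"
begin

lemma mono_diff:
  fixes g d s u :: real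
  assumes "g < 0" "d > 0" "0 < s" "s \<le> u"
  shows "u powr g - (u + d) powr g \<le> s powr g - (s + d) powr g"
proof -
  have "(\<lambda>x. x powr g - (x + d) powr g) s \<ge> (\<lambda>x. x powr g - (x + d) powr g) u"
  proof (rule DERIV_nonpos_imp_nonincreasing[OF assms(4)])
    fix x assume x: "s \<le> x" "x \<le> u"
    hence xp: "x > 0" using assms by auto
    have "((\<lambda>x. x powr g - (x + d) powr g) has_real_derivative
            (g * x powr (g - 1) - g * (x + d) powr (g - 1) * 1)) (at x)"
      using xp assms by (auto intro!: derivative_eq_intros)
    moreover have "g * x powr (g - 1) - g * (x + d) powr (g - 1) * 1 \<le> 0"
    proof -
      have "(x + d) powr (g - 1) \<le> x powr (g - 1)"
        using powr_mono2'[of "g - 1" x "x + d"] xp assms by auto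
      hence "g * (x powr (g - 1) - (x + d) powr (g - 1)) \<le> 0"
        using assms by (intro mult_nonpos_nonneg) auto
      thus ?thesis by (simp add: algebra_simps)
    qed
    ultimately show "\<exists>y. ((\<lambda>x. x powr g - (x + d) powr g) has_real_derivative y) (at x) \<and> y \<le> 0"
      by blast
  qed
  thus ?thesis by simp
qed

lemma int_diff:
  fixes q e d :: real
  assumes "-1 < q" "e > 0" "d > 0"
  shows "((\<lambda>r. (e - r) powr q - (e + d - r) powr q) has_integral
          (d powr (q + 1) + e powr (q + 1) - (e + d) powr (q + 1)) / (q + 1)) {0..e}"
proof -
  define F where "F = (\<lambda>r. ((e + d - r) powr (q + 1) - (e - r) powr (q + 1)) / (q + 1))"
  have "((\<lambda>r. (e - r) powr q - (e + d - r) powr q) has_integral (F e - F 0)) {0..e}"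
  proof (rule fundamental_theorem_of_calculus_interior)
    show "0 \<le> e" using assms by simp
    show "continuous_on {0..e} F" unfolding F_def
      using assms by (intro continuous_intros continuous_on_powr') auto
    fix x assume x: "x \<in> {0<..<e}"
    have p1: "e + d - x > 0" "e - x > 0" using x assms by auto
    have dd: "((\<lambda>r. (c - r) powr (q + 1)) has_real_derivative (- ((q + 1) * (c - x) powr q))) (at x)"
      if "c - x > 0" for c
    proof -
      have "((\<lambda>r. (c - r) powr (q + 1)) has_real_derivative ((q + 1) * (c - x) powr (q + 1 - 1)) * (-1)) (at x)"
        using DERIV_chain2[of "\<lambda>z. z powr (q + 1)" "(q + 1) * (c - x) powr (q + 1 - 1)" "\<lambda>r. c - r" x "-1" UNIV,
               OF has_real_derivative_powr[OF that]] that
        by (auto intro!: derivative_eq_intros)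
      thus ?thesis by simp
    qed
    have "(F has_real_derivative ((- ((q + 1) * (e + d - x) powr q)) - (- ((q + 1) * (e - x) powr q))) / (q + 1)) (at x)"
      unfolding F_def
      by (intro DERIV_cdivide DERIV_diff dd p1) 
    moreover have "((- ((q + 1) * (e + d - x) powr q)) - (- ((q + 1) * (e - x) powr q))) / (q + 1)
       = (e - x) powr q - (e + d - x) powr q" using assms by (simp add: field_simps)
    ultimately have "(F has_real_derivative ((e - x) powr q - (e + d - x) powr q)) (at x)" by simp
    thus "(F has_vector_derivative (e - x) powr q - (e + d - x) powr q) (at x)"
      by (simp add: has_real_derivative_iff_has_vector_derivative)
  qed
  moreover have "F e - F 0 = (d powr (q + 1) + e powr (q + 1) - (e + d) powr (q + 1)) / (q + 1)"
    unfolding F_def using assms by (simp add: diff_divide_distrib[symmetric] add.commute)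
  ultimately show ?thesis by simp
qed


lemma main_bound:
  fixes q K e d :: real and f :: "real \<Rightarrow> real"
  assumes "-1 < q" "e > 0" "d > 0" "K \<ge> 0" "f e = 0"
    and le: "\<And>r. 0 \<le> r \<Longrightarrow> r < e \<Longrightarrow> f r \<le> K * ((e - r) powr q - (e + d - r) powr q)"
  shows "integral {0..e} f \<le> K * d powr (q + 1) / (q + 1)"
proof -
  define g where "g = (\<lambda>r. if r = e then 0 else K * ((e - r) powr q - (e + d - r) powr q))"
  define I where "I = K * ((d powr (q + 1) + e powr (q + 1) - (e + d) powr (q + 1)) / (q + 1))"
  have Ki: "((\<lambda>r. K * ((e - r) powr q - (e + d - r) powr q)) has_integral I) {0..e}"
    unfolding I_def by (intro has_integral_mult_right int_diff assms)
  have gi: "(g has_integral I) {0..e}"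
    by (rule has_integral_spike[where S="{e}", OF negligible_sing _ Ki]) (auto simp: g_def)
  have "e powr (q + 1) \<le> (e + d) powr (q + 1)"
    using assms by (intro powr_mono2) auto
  hence "I \<le> K * (d powr (q + 1) / (q + 1))"
    unfolding I_def using assms by (intro mult_left_mono divide_right_mono) auto
  hence Ile: "I \<le> K * d powr (q + 1) / (q + 1)" by simp
  have nn: "0 \<le> K * d powr (q + 1) / (q + 1)" using assms by auto
  show ?thesis
  proof (cases "f integrable_on {0..e}")
    case True
    have "integral {0..e} f \<le> I"
      by (rule has_integral_le[OF integrable_integral[OF True] gi])
         (use assms le in \<open>auto simp: g_def\<close>)
    thus ?thesis using Ile by simp
  next
    case False
    thus ?thesis using nn by (simp add: not_integrable_integral)
  qed
qed

lemma pw_C1: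
  fixes b g s u d :: real
  assumes "b < 0" "g < 0" "d > 0" "0 < s" "s \<le> u"
  shows "s powr b * (u powr g - (u + d) powr g) \<le> s powr (b + g) - (s + d) powr (b + g)"
proof -
  have "s powr b * (u powr g - (u + d) powr g) \<le> s powr b * (s powr g - (s + d) powr g)"
    using assms by (intro mult_left_mono mono_diff) auto
  also have "\<dots> = s powr (b + g) - s powr b * (s + d) powr g" by (simp add: powr_add algebra_simps)
  also have "\<dots> \<le> s powr (b + g) - (s + d) powr b * (s + d) powr g"
    using assms powr_mono2'[of b s "s + d"] by (intro diff_left_mono mult_right_mono) auto
  also have "\<dots> = s powr (b + g) - (s + d) powr (b + g)" by (simp add: powr_add)
  finally show ?thesis .
qed

lemma pw_C2:
  fixes b g s u d T :: real
  assumes "b \<ge> 0" "g < 0" "d > 0" "0 < s" "s \<le> u" "s \<le> T"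
  shows "s powr b * (u powr g - (u + d) powr g) \<le> T powr b * (s powr g - (s + d) powr g)"
proof -
  have D0: "0 \<le> u powr g - (u + d) powr g" using assms powr_mono2'[of g u "u + d"] by auto
  have "s powr b * (u powr g - (u + d) powr g) \<le> T powr b * (u powr g - (u + d) powr g)"
    using assms D0 by (intro mult_right_mono powr_mono2) auto
  also have "\<dots> \<le> T powr b * (s powr g - (s + d) powr g)"
    using assms by (intro mult_left_mono mono_diff) auto
  finally show ?thesis .
qed

theorem lemma3p5:
  fixes T \<beta> \<gamma> :: real
  assumes "T > 0"
    and "(\<beta> < 0 \<and> \<gamma> < 0 \<and> -1 < \<beta> + \<gamma> \<and> \<beta> + \<gamma> < 0) \<or> (\<beta> \<ge> 0 \<and> -1 < \<gamma> \<and> \<gamma> < 0)"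
  shows "\<exists>C. \<forall>N::nat. N \<ge> 2 \<longrightarrow>
           (\<forall>j::nat. 1 < j \<and> j \<le> N \<longrightarrow>
             (\<forall>\<tau>::real. (real j - 1) * (T / real N) < \<tau> \<and> \<tau> \<le> real j * (T / real N) \<longrightarrow>
               (\<forall>\<eta>::real. 0 < \<eta> \<and> \<eta> \<le> (real j - 1) * (T / real N) \<longrightarrow>
                  integral {0..\<eta>} (\<lambda>r. (\<eta> - r) powr \<beta> *
                      (((real j - 1) * (T / real N) - r) powr \<gamma> - (\<tau> - r) powr \<gamma>))
                  \<le> C * (T / real N) powr (min (\<beta> + \<gamma> + 1) (\<gamma> + 1)))))"
proof -
  obtain q K where q: "-1 < q" "q < 0" and K: "K \<ge> 0" and mq: "min (\<beta> + \<gamma> + 1) (\<gamma> + 1) = q + 1"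
    and pw: "\<And>s u d. 0 < d \<Longrightarrow> 0 < s \<Longrightarrow> s \<le> u \<Longrightarrow> s \<le> T \<Longrightarrow>
        s powr \<beta> * (u powr \<gamma> - (u + d) powr \<gamma>) \<le> K * (s powr q - (s + d) powr q)"
  proof (cases "\<beta> < 0 \<and> \<gamma> < 0 \<and> -1 < \<beta> + \<gamma> \<and> \<beta> + \<gamma> < 0")
    case True
    show ?thesis
      by (rule that[of "\<beta> + \<gamma>" 1]) (use True pw_C1 in auto)
  next
    case False
    hence F: "\<beta> \<ge> 0" "-1 < \<gamma>" "\<gamma> < 0" using assms(2) by auto
    show ?thesis
      by (rule that[of \<gamma> "T powr \<beta>"]) (use F pw_C2 in auto)
  qed
  show ?thesis
  proof (intro exI[of _ "K / (q + 1)"] allI impI, elim conjE)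
    fix N j \<tau> \<eta>
    assume N: "2 \<le> N" and j: "1 < j" "j \<le> N"
      and tau: "(real j - 1) * (T / real N) < \<tau>" "\<tau> \<le> real j * (T / real N)"
      and eta: "0 < \<eta>" "\<eta> \<le> (real j - 1) * (T / real N)"
    define h where "h = T / real N"
    define a where "a = (real j - 1) * h"
    define d where "d = \<tau> - a"
    have hpos: "h > 0" unfolding h_def using N assms(1) by auto
    have t1: "a < \<tau>" "\<tau> \<le> real j * h" using tau unfolding a_def h_def by auto
    have "a = real j * h - h" unfolding a_def by (simp add: algebra_simps)
    hence dpos: "d > 0" and dle: "d \<le> h" using t1 unfolding d_def by auto
    have "a \<le> real N * h" unfolding a_def using j hpos by (intro mult_right_mono) auto
    hence aT: "a \<le> T" unfolding h_def using N by simp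
    have ea: "\<eta> \<le> a" using eta unfolding a_def h_def by simp
    have "integral {0..\<eta>} (\<lambda>r. (\<eta> - r) powr \<beta> * ((a - r) powr \<gamma> - (\<tau> - r) powr \<gamma>))
          \<le> K * d powr (q + 1) / (q + 1)"
    proof (rule main_bound[OF q(1) eta(1) dpos K])
      fix r assume r: "0 \<le> r" "r < \<eta>"
      have "(\<eta> - r) powr \<beta> * ((a - r) powr \<gamma> - ((a - r) + d) powr \<gamma>)
           \<le> K * ((\<eta> - r) powr q - ((\<eta> - r) + d) powr q)"
        using r ea aT by (intro pw dpos) auto
      moreover have e1: "\<tau> - r = (a - r) + d" "\<eta> + d - r = (\<eta> - r) + d" unfolding d_def by auto
      ultimately show "(\<eta> - r) powr \<beta> * ((a - r) powr \<gamma> - (\<tau> - r) powr \<gamma>)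
           \<le> K * ((\<eta> - r) powr q - (\<eta> + d - r) powr q)" by (simp only: e1)
    qed simp
    also have "\<dots> \<le> K * h powr (q + 1) / (q + 1)"
      using q K dpos dle by (intro divide_right_mono mult_left_mono powr_mono2) auto
    finally show "integral {0..\<eta>} (\<lambda>r. (\<eta> - r) powr \<beta> *
                      (((real j - 1) * (T / real N) - r) powr \<gamma> - (\<tau> - r) powr \<gamma>))
                  \<le> K / (q + 1) * (T / real N) powr (min (\<beta> + \<gamma> + 1) (\<gamma> + 1))"
      unfolding mq a_def h_def by simp
  qed
qed

end
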